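(* Let $E$ be a Banach space over $\mathbb{K}$, $m,k\in\mathbb{N}$ with $k>1$, and suppose that there exists a surjective polynomial $R\in\mathcal{P}(^{mk}E;\ell_1)$. Then there exists a weak*-weak*-continuous operator $T\in\mathcal{L}(\mathcal{P}(^k\ell_1);\mathcal{P}(^{mk}E))$ such that $T\neq\Delta^1_kP$ for every $P\in\mathcal{P}(^mE;\ell_1)$.
   Context: Banach spaces are over $\mathbb{K}=\mathbb{R}$ or $\mathbb{C}$. $\mathcal{P}(^jX;Y)$ is the space of continuous $j$-homogeneous polynomials $X\to Y$, $\mathcal{P}(^jX)=\mathcal{P}(^jX;\mathbb{K})$, $\mathcal{L}(X;Y)$ the bounded linear operators. For $P\in\mathcal{P}(^mE;F)$, $\Delta^1_kP\colon\mathcal{P}(^kF)\to\mathcal{P}(^{mk}E)$ is $\Delta^1_kP(q)=q\circ P$. For a Banach space $X$ and $j\in\mathbb{N}$, $\widehat{\otimes}^{j,s}_\pi X$ is the completed $j$-fold symmetric projective tensor product, and for $q\in\mathcal{P}(^jX)$, $q_L\in(\widehat{\otimes}^{j,s}_\pi X)^*$ is the linearization with $q_L(x\otimes\cdots\otimes x)=q(x)$; $q\mapsto q_L$ is a topological isomorphism $\mathcal{P}(^jX)\to(\widehat{\otimes}^{j,s}_\pi X)^*$. The weak* topology on $\mathcal{P}(^jX)$ is the one induced via this isomorphism by the weak* topology of $(\widehat{\otimes}^{j,s}_\pi X)^*$. *)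

theory Defs
  imports "HOL-Analysis.Analysis"
begin

text \<open>This lets us treat
E (a type), the scalar field K and the sequence space l1 uniformly.\<close>

record ('k, 'a) nspace =
  carr :: "'a set"
  add  :: "'a \<Rightarrow> 'a \<Rightarrow> 'a"
  smul :: "'k \<Rightarrow> 'a \<Rightarrow> 'a"
  nrm  :: "'a \<Rightarrow> real"

text \<open>A K-vector space structure (K = 'k) on a real Banach space 'e, compatible with
its real structure and its norm.  With 'k :: {real_normed_field, banach}
(i.e. K = R or K = C), 'e :: banach together with such sc is a Banach space over K.\<close>

definition kvs :: "('k::real_normed_field \<Rightarrow> 'e::real_normed_vector \<Rightarrow> 'e) \<Rightarrow> bool" where
  "kvs sc \<longleftrightarrow>
     (\<forall>a b x. sc a (sc b x) = sc (a * b) x) \<and>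
     (\<forall>x. sc 1 x = x) \<and>
     (\<forall>a x y. sc a (x + y) = sc a x + sc a y) \<and>
     (\<forall>a b x. sc (a + b) x = sc a x + sc b x) \<and>
     (\<forall>r x. sc (of_real r) x = r *\<^sub>R x) \<and>
     (\<forall>a x. norm (sc a x) = norm a * norm x)"

definition Esp :: "('k \<Rightarrow> 'e \<Rightarrow> 'e) \<Rightarrow> ('k, 'e::real_normed_vector) nspace" where
  "Esp sc = \<lparr>carr = UNIV, add = (+), smul = sc, nrm = norm\<rparr>"

definition Ksp :: "('k::real_normed_field, 'k) nspace" where
  "Ksp = \<lparr>carr = UNIV, add = (+), smul = (*), nrm = norm\<rparr>"

definition L1 :: "('k::real_normed_field, nat \<Rightarrow> 'k) nspace" where
  "L1 = \<lparr>carr = {x. summable (\<lambda>n. norm (x n))},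
         add = (\<lambda>x y n. x n + y n),
         smul = (\<lambda>a x n. a * x n),
         nrm = (\<lambda>x. \<Sum>n. norm (x n))\<rparr>"

text \<open>Continuous (= bounded) j-linear maps X^j \<rightarrow> Y; arguments are indexed by i < j.\<close>

definition mlin :: "('k::real_normed_field, 'a) nspace \<Rightarrow> ('k, 'b) nspace \<Rightarrow> nat
                    \<Rightarrow> ((nat \<Rightarrow> 'a) \<Rightarrow> 'b) \<Rightarrow> bool" where
  "mlin X Y j A \<longleftrightarrow>
     (\<forall>xs ys. (\<forall>i<j. xs i = ys i) \<longrightarrow> A xs = A ys) \<and>
     (\<forall>xs. (\<forall>i<j. xs i \<in> carr X) \<longrightarrow> A xs \<in> carr Y) \<and>
     (\<forall>xs i u v a b. (\<forall>l<j. xs l \<in> carr X) \<and> i < j \<and> u \<in> carr X \<and> v \<in> carr X \<longrightarrow>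
        A (xs(i := add X (smul X a u) (smul X b v))) =
        add Y (smul Y a (A (xs(i := u)))) (smul Y b (A (xs(i := v))))) \<and>
     (\<exists>C. \<forall>xs. (\<forall>i<j. xs i \<in> carr X) \<longrightarrow> nrm Y (A xs) \<le> C * (\<Prod>i<j. nrm X (xs i)))"

definition hpoly :: "('k::real_normed_field, 'a) nspace \<Rightarrow> ('k, 'b) nspace \<Rightarrow> nat
                     \<Rightarrow> ('a \<Rightarrow> 'b) \<Rightarrow> bool" where
  "hpoly X Y j P \<longleftrightarrow> (\<exists>A. mlin X Y j A \<and> (\<forall>x\<in>carr X. P x = A (\<lambda>_. x)))"

text \<open>The space P(^j X) of scalar valued continuous j-homogeneous polynomials
(extended by 0 outside the carrier, so each polynomial has a unique representative).\<close>

definition spoly :: "('k::real_normed_field, 'a) nspace \<Rightarrow> nat \<Rightarrow> ('a \<Rightarrow> 'k) set" where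
  "spoly X j = {q. hpoly X Ksp j q \<and> (\<forall>x. x \<notin> carr X \<longrightarrow> q x = 0)}"

definition pnorm :: "('k::real_normed_field, 'a) nspace \<Rightarrow> ('a \<Rightarrow> 'k) \<Rightarrow> real" where
  "pnorm X q = Sup ((\<lambda>x. norm (q x)) ` {x \<in> carr X. nrm X x \<le> 1})"

text \<open>Elements of the completed symmetric projective tensor product are exactly the
series  u = \<Sum>n. lam n * x_n \<otimes> ... \<otimes> x_n  with \<Sum>n |lam n| \<parallel>x_n\<parallel>^j < \<infinity>;
for such u, q_L(u) = \<Sum>n. lam n * q(x_n).\<close>

definition adm :: "('k::real_normed_field, 'a) nspace \<Rightarrow> nat \<Rightarrow> (nat \<Rightarrow> 'k) \<times> (nat \<Rightarrow> 'a) \<Rightarrow> bool" where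
  "adm X j u \<longleftrightarrow> (\<forall>n. snd u n \<in> carr X) \<and>
                  summable (\<lambda>n. norm (fst u n) * nrm X (snd u n) ^ j)"

definition tens_eval :: "(nat \<Rightarrow> 'k::real_normed_field) \<times> (nat \<Rightarrow> 'a) \<Rightarrow> ('a \<Rightarrow> 'k) \<Rightarrow> 'k" where
  "tens_eval u q = (\<Sum>n. fst u n * q (snd u n))"

definition wstar :: "('k::{real_normed_field}, 'a) nspace \<Rightarrow> nat \<Rightarrow> ('a \<Rightarrow> 'k) topology" where
  "wstar X j = pullback_topology (spoly X j)
       (\<lambda>q. restrict (\<lambda>u. tens_eval u q) {u. adm X j u})
       (product_topology (\<lambda>_. euclidean) {u. adm X j u})"

definition blin_poly :: "('k::real_normed_field, 'a) nspace \<Rightarrow> nat \<Rightarrow> ('k, 'b) nspace \<Rightarrow> nat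
                         \<Rightarrow> (('a \<Rightarrow> 'k) \<Rightarrow> ('b \<Rightarrow> 'k)) \<Rightarrow> bool" where
  "blin_poly X i Y j T \<longleftrightarrow>
     (\<forall>q\<in>spoly X i. T q \<in> spoly Y j) \<and>
     (\<forall>q\<in>spoly X i. \<forall>q'\<in>spoly X i. \<forall>a b.
        T (\<lambda>x. a * q x + b * q' x) = (\<lambda>y. a * T q y + b * T q' y)) \<and>
     (\<exists>C. \<forall>q\<in>spoly X i. pnorm Y (T q) \<le> C * pnorm X q)"

definition Delta1 :: "('e \<Rightarrow> 'b) \<Rightarrow> ('b \<Rightarrow> 'k) \<Rightarrow> ('e \<Rightarrow> 'k)" where
  "Delta1 P q = q \<circ> P"

end

theory Submission
  imports Defs
begin

lemma L1_coord_le: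
  fixes x :: "nat \<Rightarrow> 'k::real_normed_field"
  assumes "x \<in> carr L1"
  shows "norm (x n) \<le> nrm L1 x"
proof -
  have s: "summable (\<lambda>n. norm (x n))" using assms by (simp add: L1_def)
  have "sum (\<lambda>n. norm (x n)) {n} \<le> (\<Sum>n. norm (x n))"
    by (rule sum_le_suminf[OF s]) auto
  then show ?thesis by (simp add: L1_def)
qed

lemma L1_nrm_nonneg:
  fixes x :: "nat \<Rightarrow> 'k::real_normed_field"
  assumes "x \<in> carr L1"
  shows "0 \<le> nrm L1 x"
  using assms by (simp add: L1_def suminf_nonneg)

definition ee :: "nat \<Rightarrow> nat \<Rightarrow> 'k::real_normed_field" where
  "ee n = (\<lambda>i. if i = n then 1 else 0)"

lemma ee_carr: "ee n \<in> carr (L1 :: ('k::real_normed_field, nat \<Rightarrow> 'k) nspace)"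
proof -
  have "(\<lambda>i. if i = n then (1::real) else 0) sums 1"
    using sums_single[of n "\<lambda>_. (1::real)"] by simp
  moreover have "(\<lambda>i. norm (ee n i :: 'k)) = (\<lambda>i. if i = n then (1::real) else 0)"
    by (auto simp: ee_def)
  ultimately show ?thesis by (auto simp: L1_def sums_summable)
qed

lemma ee_nrm: "nrm (L1 :: ('k::real_normed_field, nat \<Rightarrow> 'k) nspace) (ee n) = 1"
proof -
  have "(\<lambda>i. if i = n then (1::real) else 0) sums 1"
    using sums_single[of n "\<lambda>_. (1::real)"] by simp
  moreover have "(\<lambda>i. norm (ee n i :: 'k)) = (\<lambda>i. if i = n then (1::real) else 0)"
    by (auto simp: ee_def)
  ultimately show ?thesis by (auto simp: L1_def sums_iff)
qed

definition monoq :: "nat \<Rightarrow> (nat \<Rightarrow> nat) \<Rightarrow> (nat \<Rightarrow> 'k::real_normed_field) \<Rightarrow> 'k" where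
  "monoq k c y = (if summable (\<lambda>n. norm (y n)) then (\<Prod>i<k. y (c i)) else 0)"

lemma monoq_spoly: "monoq k c \<in> spoly (L1 :: ('k::real_normed_field, nat \<Rightarrow> 'k) nspace) k"
proof -
  define A where "A = (\<lambda>xs::nat \<Rightarrow> nat \<Rightarrow> 'k. \<Prod>l<k. xs l (c l))"
  have "mlin (L1 :: ('k, nat \<Rightarrow> 'k) nspace) Ksp k A"
    unfolding mlin_def
  proof (intro conjI allI impI)
    fix xs ys :: "nat \<Rightarrow> nat \<Rightarrow> 'k" assume "\<forall>i<k. xs i = ys i"
    then show "A xs = A ys" unfolding A_def by (intro prod.cong) auto
  next
    fix xs :: "nat \<Rightarrow> nat \<Rightarrow> 'k" show "A xs \<in> carr Ksp" by (simp add: Ksp_def)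
  next
    fix xs :: "nat \<Rightarrow> nat \<Rightarrow> 'k" and i and u v :: "nat \<Rightarrow> 'k" and a b :: 'k
    assume h: "(\<forall>l<k. xs l \<in> carr L1) \<and> i < k \<and> u \<in> carr L1 \<and> v \<in> carr L1"
    define Q where "Q = (\<Prod>l\<in>{..<k}-{i}. xs l (c l))"
    have r: "A (xs(i := w)) = w (c i) * Q" for w
    proof -
      have "A (xs(i := w)) = (xs(i:=w)) i (c i) * (\<Prod>l\<in>{..<k}-{i}. (xs(i:=w)) l (c l))"
        unfolding A_def using h by (intro prod.remove) auto
      also have "(\<Prod>l\<in>{..<k}-{i}. (xs(i:=w)) l (c l)) = Q"
        unfolding Q_def by (intro prod.cong) auto
      finally show ?thesis by (simp only: fun_upd_same)
    qed
    show "A (xs(i := add L1 (smul L1 a u) (smul L1 b v))) =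
        add Ksp (smul Ksp a (A (xs(i := u)))) (smul Ksp b (A (xs(i := v))))"
      unfolding r by (simp add: L1_def Ksp_def algebra_simps)
  next
    show "\<exists>C. \<forall>xs. (\<forall>i<k. xs i \<in> carr L1) \<longrightarrow> nrm Ksp (A xs) \<le> C * (\<Prod>i<k. nrm L1 (xs i))"
    proof (intro exI[of _ 1] allI impI)
      fix xs :: "nat \<Rightarrow> nat \<Rightarrow> 'k" assume h: "\<forall>i<k. xs i \<in> carr L1"
      have "nrm Ksp (A xs) = (\<Prod>l<k. norm (xs l (c l)))"
        by (simp add: Ksp_def A_def prod_norm)
      also have "\<dots> \<le> (\<Prod>i<k. nrm L1 (xs i))"
        using h by (intro prod_mono) (auto intro: L1_coord_le)
      finally show "nrm Ksp (A xs) \<le> 1 * (\<Prod>i<k. nrm L1 (xs i))" by simp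
    qed
  qed
  moreover have "\<forall>x\<in>carr L1. monoq k c x = A (\<lambda>_. x)"
    by (auto simp: monoq_def A_def L1_def)
  ultimately show ?thesis
    unfolding spoly_def hpoly_def by (auto simp: monoq_def L1_def)
qed

lemma monoq_apply: "x \<in> carr L1 \<Longrightarrow> monoq k c x = (\<Prod>i<k. x (c i))"
  by (simp add: monoq_def L1_def)

lemma mlin_coord:
  fixes A :: "(nat \<Rightarrow> 'a) \<Rightarrow> nat \<Rightarrow> 'k::real_normed_field"
  assumes "mlin X L1 j A"
  shows "mlin X Ksp j (\<lambda>xs. c0 * A xs 0 + c1 * A xs 1)"
  unfolding mlin_def
proof (intro conjI allI impI)
  note a = assms[unfolded mlin_def]
  fix xs ys :: "nat \<Rightarrow> 'a" assume "\<forall>i<j. xs i = ys i"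
  then show "c0 * A xs 0 + c1 * A xs 1 = c0 * A ys 0 + c1 * A ys 1" using a by metis
next
  fix xs :: "nat \<Rightarrow> 'a" show "c0 * A xs 0 + c1 * A xs 1 \<in> carr Ksp" by (simp add: Ksp_def)
next
  note a = assms[unfolded mlin_def]
  fix xs :: "nat \<Rightarrow> 'a" and i u v and a b :: 'k
  assume h: "(\<forall>l<j. xs l \<in> carr X) \<and> i < j \<and> u \<in> carr X \<and> v \<in> carr X"
  then have e: "A (xs(i := add X (smul X a u) (smul X b v))) =
        (\<lambda>n. a * A (xs(i := u)) n + b * A (xs(i := v)) n)"
    using a by (simp add: L1_def)
  show "c0 * A (xs(i := add X (smul X a u) (smul X b v))) 0 + c1 * A (xs(i := add X (smul X a u) (smul X b v))) 1 =
       add Ksp (smul Ksp a (c0 * A (xs(i := u)) 0 + c1 * A (xs(i := u)) 1))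
        (smul Ksp b (c0 * A (xs(i := v)) 0 + c1 * A (xs(i := v)) 1))"
    unfolding e by (simp add: Ksp_def algebra_simps)
next
  note a = assms[unfolded mlin_def]
  obtain C where C: "\<forall>xs. (\<forall>i<j. xs i \<in> carr X) \<longrightarrow> nrm L1 (A xs) \<le> C * (\<Prod>i<j. nrm X (xs i))"
    using a by blast
  show "\<exists>C. \<forall>xs. (\<forall>i<j. xs i \<in> carr X) \<longrightarrow> nrm Ksp (c0 * A xs 0 + c1 * A xs 1) \<le> C * (\<Prod>i<j. nrm X (xs i))"
  proof (intro exI[of _ "(norm c0 + norm c1) * C"] allI impI)
    fix xs assume h: "\<forall>i<j. xs i \<in> carr X"
    have cr: "A xs \<in> carr L1" using a h by blast
    have "nrm Ksp (c0 * A xs 0 + c1 * A xs 1) \<le> norm c0 * norm (A xs 0) + norm c1 * norm (A xs 1)"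
      by (simp add: Ksp_def norm_mult[symmetric] norm_triangle_ineq)
    also have "\<dots> \<le> norm c0 * nrm L1 (A xs) + norm c1 * nrm L1 (A xs)"
      using L1_coord_le[OF cr] by (intro add_mono mult_left_mono) auto
    also have "\<dots> \<le> norm c0 * (C * (\<Prod>i<j. nrm X (xs i))) + norm c1 * (C * (\<Prod>i<j. nrm X (xs i)))"
      using C h by (intro add_mono mult_left_mono) auto
    finally show "nrm Ksp (c0 * A xs 0 + c1 * A xs 1) \<le> (norm c0 + norm c1) * C * (\<Prod>i<j. nrm X (xs i))"
      by (simp add: algebra_simps)
  qed
qed

lemma R_facts:
  fixes R :: "'e::real_normed_vector \<Rightarrow> nat \<Rightarrow> 'k::real_normed_field"
  assumes "hpoly (Esp sc) L1 j R"
  shows "(\<forall>x. R x \<in> carr L1) \<and> (\<exists>C\<ge>0. \<forall>x. nrm L1 (R x) \<le> C * norm x ^ j)"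
proof -
  obtain A where A: "mlin (Esp sc) L1 j A" "\<forall>x. R x = A (\<lambda>_. x)"
    using assms by (auto simp: hpoly_def Esp_def)
  obtain C where C: "\<forall>xs. (\<forall>i<j. xs i \<in> carr (Esp sc)) \<longrightarrow> nrm L1 (A xs) \<le> C * (\<Prod>i<j. nrm (Esp sc) (xs i))"
    using A(1) unfolding mlin_def by blast
  have c1: "\<forall>x. R x \<in> carr L1" using A unfolding mlin_def by (simp add: Esp_def)
  have "nrm L1 (R x) \<le> max C 0 * norm x ^ j" for x
  proof -
    have "nrm L1 (R x) \<le> C * norm x ^ j" using C[rule_format, of "\<lambda>_. x"] A(2) by (simp add: Esp_def)
    also have "\<dots> \<le> max C 0 * norm x ^ j" by (intro mult_right_mono) auto
    finally show ?thesis .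
  qed
  then show ?thesis using c1 by (intro conjI exI[of _ "max C 0"]) auto
qed

definition Tf :: "('e \<Rightarrow> nat \<Rightarrow> 'k::real_normed_field) \<Rightarrow> ((nat \<Rightarrow> 'k) \<Rightarrow> 'k) \<Rightarrow> 'e \<Rightarrow> 'k" where
  "Tf R q = (\<lambda>x. q (ee 0) * R x 0 + q (ee 1) * R x 1)"

lemma Tf_spoly:
  fixes R :: "'e::real_normed_vector \<Rightarrow> nat \<Rightarrow> 'k::real_normed_field"
  assumes "hpoly (Esp sc) L1 j R"
  shows "Tf R q \<in> spoly (Esp sc) j"
proof -
  obtain A where A: "mlin (Esp sc) L1 j A" "\<forall>x. R x = A (\<lambda>_. x)"
    using assms by (auto simp: hpoly_def Esp_def)
  have "mlin (Esp sc) Ksp j (\<lambda>xs. q (ee 0) * A xs 0 + q (ee 1) * A xs 1)"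
    by (rule mlin_coord[OF A(1)])
  then show ?thesis using A(2)
    unfolding spoly_def hpoly_def Tf_def by (auto simp: Esp_def)
qed

lemma spoly_L1_bound:
  fixes q :: "(nat \<Rightarrow> 'k::real_normed_field) \<Rightarrow> 'k"
  assumes "q \<in> spoly L1 k"
  shows "bdd_above ((\<lambda>x. norm (q x)) ` {x \<in> carr L1. nrm L1 x \<le> 1})"
proof -
  obtain A where A: "mlin L1 Ksp k A" "\<forall>x\<in>carr L1. q x = A (\<lambda>_. x)"
    using assms by (auto simp: spoly_def hpoly_def)
  obtain C where C: "\<forall>xs. (\<forall>i<k. xs i \<in> carr L1) \<longrightarrow> nrm Ksp (A xs) \<le> C * (\<Prod>i<k. nrm L1 (xs i))"
    using A(1) unfolding mlin_def by blast
  have "norm (q x) \<le> max C 0" if "x \<in> carr L1" "nrm L1 x \<le> 1" for x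
  proof -
    have n0: "0 \<le> nrm L1 x" using L1_nrm_nonneg that by blast
    have "norm (q x) \<le> C * nrm L1 x ^ k" using C[rule_format, of "\<lambda>_. x"] A(2) that by (simp add: Ksp_def)
    also have "\<dots> \<le> max C 0 * nrm L1 x ^ k" using n0 by (intro mult_right_mono) auto
    also have "\<dots> \<le> max C 0 * 1" using n0 that by (intro mult_left_mono power_le_one) auto
    finally show ?thesis by simp
  qed
  then show ?thesis unfolding bdd_above_def by (intro exI[of _ "max C 0"]) auto
qed

lemma spoly_L1_le_pnorm:
  fixes q :: "(nat \<Rightarrow> 'k::real_normed_field) \<Rightarrow> 'k"
  assumes "q \<in> spoly L1 k" "x \<in> carr L1" "nrm L1 x \<le> 1"
  shows "norm (q x) \<le> pnorm L1 q"
  unfolding pnorm_def using assms spoly_L1_bound[OF assms(1)]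
  by (intro cSup_upper) auto

lemma Tf_blin:
  fixes R :: "'e::real_normed_vector \<Rightarrow> nat \<Rightarrow> 'k::real_normed_field"
  assumes "hpoly (Esp sc) L1 j R"
  shows "blin_poly L1 k (Esp sc) j (Tf R)"
  unfolding blin_poly_def
proof (intro conjI ballI allI)
  fix q :: "(nat \<Rightarrow> 'k) \<Rightarrow> 'k" show "Tf R q \<in> spoly (Esp sc) j" by (rule Tf_spoly[OF assms])
next
  fix q q' :: "(nat \<Rightarrow> 'k) \<Rightarrow> 'k" and a b :: 'k
  show "Tf R (\<lambda>x. a * q x + b * q' x) = (\<lambda>y. a * Tf R q y + b * Tf R q' y)"
    by (simp add: Tf_def algebra_simps)
next
  obtain CR where CR: "CR \<ge> 0" "\<forall>x. nrm L1 (R x) \<le> CR * norm x ^ j" and Rc: "\<forall>x. R x \<in> carr L1"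
    using R_facts[OF assms] by blast
  show "\<exists>C. \<forall>q\<in>spoly L1 k. pnorm (Esp sc) (Tf R q) \<le> C * pnorm L1 q"
  proof (intro exI[of _ "2 * CR"] ballI)
    fix q :: "(nat \<Rightarrow> 'k) \<Rightarrow> 'k" assume q: "q \<in> spoly L1 k"
    have p0: "norm (q (ee 0)) \<le> pnorm L1 q" "norm (q (ee 1)) \<le> pnorm L1 q"
      using spoly_L1_le_pnorm[OF q ee_carr ee_nrm[THEN eq_refl]] by auto
    have Rb: "norm (R x i) \<le> CR" if "norm x \<le> 1" for x i
    proof -
      have "norm (R x i) \<le> nrm L1 (R x)" using L1_coord_le Rc by blast
      also have "\<dots> \<le> CR * norm x ^ j" using CR by blast
      also have "\<dots> \<le> CR * 1" using CR that by (intro mult_left_mono power_le_one) auto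
      finally show ?thesis by simp
    qed
    have "norm (Tf R q x) \<le> 2 * CR * pnorm L1 q" if "norm x \<le> 1" for x
    proof -
      have "norm (Tf R q x) \<le> norm (q (ee 0)) * norm (R x 0) + norm (q (ee 1)) * norm (R x 1)"
        unfolding Tf_def by (metis norm_mult norm_triangle_ineq)
      also have "\<dots> \<le> pnorm L1 q * CR + pnorm L1 q * CR"
        using p0 Rb[OF that] order_trans[OF norm_ge_zero p0(1)] by (intro add_mono mult_mono) auto
      finally show ?thesis by simp
    qed
    then show "pnorm (Esp sc) (Tf R q) \<le> 2 * CR * pnorm L1 q"
      unfolding pnorm_def by (intro cSup_least) (auto simp: Esp_def intro: exI[of _ 0])
  qed
qed

lemma wstar_eval_cont:
  assumes "adm X j u"
  shows "continuous_map (wstar X j) euclidean (\<lambda>q. tens_eval u q)"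
proof -
  have c: "continuous_map (product_topology (\<lambda>_. euclidean) {u. adm X j u}) euclidean (\<lambda>f. f u)"
    using continuous_map_product_projection[of u "{u. adm X j u}" "\<lambda>_. euclidean"] assms by simp
  have "(\<lambda>f. f u) \<circ> (\<lambda>q. restrict (\<lambda>u. tens_eval u q) {u. adm X j u}) = (\<lambda>q. tens_eval u q)"
    using assms by (auto simp: fun_eq_iff)
  then show ?thesis
    using continuous_map_pullback[OF c, of "spoly X j" "\<lambda>q. restrict (\<lambda>u. tens_eval u q) {u. adm X j u}"]
    unfolding wstar_def by simp
qed

lemma ee_cont: "continuous_map (wstar L1 k) euclidean (\<lambda>q::(nat \<Rightarrow> 'k::real_normed_field) \<Rightarrow> 'k. q (ee i))"
proof -
  define u where "u = ((\<lambda>n. if n = 0 then 1 else 0) :: nat \<Rightarrow> 'k, (\<lambda>_::nat. ee i :: nat \<Rightarrow> 'k))"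
  have "(\<lambda>n. if n = 0 then (1::real) else 0) sums 1"
    using sums_single[of 0 "\<lambda>_. (1::real)"] by simp
  moreover have "(\<lambda>n. norm (fst u n) * nrm L1 (snd u n) ^ k) = (\<lambda>n. if n = 0 then (1::real) else 0)"
    by (auto simp: u_def ee_nrm)
  ultimately have "adm L1 k u" unfolding adm_def by (auto simp: u_def ee_carr sums_summable)
  note c = wstar_eval_cont[OF this]
  have "tens_eval u q = q (ee i)" for q :: "(nat \<Rightarrow> 'k) \<Rightarrow> 'k"
  proof -
    have "(\<lambda>n. fst u n * q (snd u n)) = (\<lambda>n. if n = 0 then q (ee i) else 0)"
      by (auto simp: u_def)
    then show ?thesis unfolding tens_eval_def using sums_single[of 0 "\<lambda>_. q (ee i)"]
      by (simp add: sums_iff)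
  qed
  then show ?thesis using c by simp
qed

lemma cont_mult_right:
  fixes f :: "'a \<Rightarrow> 'k::real_normed_field"
  assumes "continuous_map X euclidean f"
  shows "continuous_map X euclidean (\<lambda>x. f x * c)"
  using assms by (simp add: continuous_map_atin tendsto_mult_right)

lemma Tf_tens:
  fixes R :: "'e::real_normed_vector \<Rightarrow> nat \<Rightarrow> 'k::{real_normed_field,banach}"
  assumes "hpoly (Esp sc) L1 j R" "adm (Esp sc) j u"
  shows "\<exists>S0 S1. \<forall>q. tens_eval u (Tf R q) = q (ee 0) * S0 + q (ee 1) * S1"
proof -
  obtain CR where CR: "CR \<ge> 0" "\<forall>x. nrm L1 (R x) \<le> CR * norm x ^ j" and Rc: "\<forall>x. R x \<in> carr L1"
    using R_facts[OF assms(1)] by blast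
  have su: "summable (\<lambda>n. norm (fst u n) * norm (snd u n) ^ j)"
    using assms(2) by (simp add: adm_def Esp_def)
  have sm: "summable (\<lambda>n. fst u n * R (snd u n) i)" for i
  proof (rule summable_comparison_test'[where g="\<lambda>n. CR * (norm (fst u n) * norm (snd u n) ^ j)" and N=0])
    show "summable (\<lambda>n. CR * (norm (fst u n) * norm (snd u n) ^ j))" using su by (rule summable_mult)
    fix n :: nat
    have "norm (R (snd u n) i) \<le> CR * norm (snd u n) ^ j"
      using L1_coord_le[of "R (snd u n)" i] Rc CR by (meson order_trans)
    then have "norm (fst u n) * norm (R (snd u n) i) \<le> norm (fst u n) * (CR * norm (snd u n) ^ j)"
      by (intro mult_left_mono) auto
    then show "norm (fst u n * R (snd u n) i) \<le> CR * (norm (fst u n) * norm (snd u n) ^ j)"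
      by (simp add: norm_mult algebra_simps)
  qed
  show ?thesis
  proof (intro exI allI)
    fix q :: "(nat \<Rightarrow> 'k) \<Rightarrow> 'k"
    have "tens_eval u (Tf R q) = (\<Sum>n. q (ee 0) * (fst u n * R (snd u n) 0) + q (ee 1) * (fst u n * R (snd u n) 1))"
      unfolding tens_eval_def Tf_def by (simp add: algebra_simps)
    also have "\<dots> = (\<Sum>n. q (ee 0) * (fst u n * R (snd u n) 0)) + (\<Sum>n. q (ee 1) * (fst u n * R (snd u n) 1))"
      by (intro suminf_add[symmetric] summable_mult sm)
    also have "\<dots> = q (ee 0) * (\<Sum>n. fst u n * R (snd u n) 0) + q (ee 1) * (\<Sum>n. fst u n * R (snd u n) 1)"
      by (simp add: suminf_mult sm)
    finally show "tens_eval u (Tf R q) = q (ee 0) * (\<Sum>n. fst u n * R (snd u n) 0) + q (ee 1) * (\<Sum>n. fst u n * R (snd u n) 1)" .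
  qed
qed

lemma Tf_cont:
  fixes R :: "'e::real_normed_vector \<Rightarrow> nat \<Rightarrow> 'k::{real_normed_field,banach}"
  assumes "hpoly (Esp sc) L1 j R"
  shows "continuous_map (wstar L1 k) (wstar (Esp sc) j) (Tf R)"
proof -
  define F where "F = (\<lambda>q. restrict (\<lambda>u. tens_eval u q) {u. adm (Esp sc) j u})"
  have "continuous_map (wstar L1 k) (product_topology (\<lambda>_. euclidean) {u. adm (Esp sc) j u}) (F \<circ> Tf R)"
    unfolding continuous_map_componentwise
  proof (intro conjI ballI)
    show "(F \<circ> Tf R) ` topspace (wstar L1 k) \<subseteq> extensional {u. adm (Esp sc) j u}"
      by (auto simp: F_def)
  next
    fix u assume "u \<in> {u. adm (Esp sc) j u}"
    then have u: "adm (Esp sc) j u" by simp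
    obtain S0 S1 where S: "\<forall>q. tens_eval u (Tf R q) = q (ee 0) * S0 + q (ee 1) * S1"
      using Tf_tens[OF assms u] by blast
    have "(\<lambda>q. (F \<circ> Tf R) q u) = (\<lambda>q. q (ee 0) * S0 + q (ee 1) * S1)"
      using S u by (auto simp: F_def fun_eq_iff)
    moreover have "continuous_map (wstar L1 k) euclidean (\<lambda>q::(nat \<Rightarrow> 'k) \<Rightarrow> 'k. q (ee 0) * S0 + q (ee 1) * S1)"
      by (intro continuous_map_add cont_mult_right ee_cont)
    ultimately show "continuous_map (wstar L1 k) euclidean (\<lambda>q. (F \<circ> Tf R) q u)" by simp
  qed
  moreover have "topspace (wstar L1 k) \<subseteq> Tf R -` spoly (Esp sc) j"
    using Tf_spoly[OF assms] by auto
  ultimately show ?thesis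
    unfolding wstar_def[of "Esp sc"] F_def by (rule continuous_map_pullback')
qed

lemma monoq_ee: "monoq k c (ee n :: nat \<Rightarrow> 'k::real_normed_field) = (\<Prod>i<k. (if c i = n then 1 else 0))"
  using monoq_apply[OF ee_carr, of k c n] by (simp add: ee_def)

theorem mainTheorem11:
  fixes sc :: "'k::{real_normed_field, banach} \<Rightarrow> 'e::banach \<Rightarrow> 'e"
    and m k :: nat
  assumes "kvs sc"
    and "k > 1"
    and "\<exists>R. hpoly (Esp sc) L1 (m * k) R \<and> R ` UNIV = carr L1"
  shows "\<exists>T. blin_poly L1 k (Esp sc) (m * k) T \<and>
             continuous_map (wstar L1 k) (wstar (Esp sc) (m * k)) T \<and>
             (\<forall>P. hpoly (Esp sc) L1 m P \<longrightarrow> (\<exists>q\<in>spoly L1 k. T q \<noteq> Delta1 P q))"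
proof -
  obtain R :: "'e \<Rightarrow> nat \<Rightarrow> 'k" where R: "hpoly (Esp sc) L1 (m * k) R" "R ` UNIV = carr L1"
    using assms(3) by blast
  have k0: "k > 0" "1 < k" using assms(2) by auto
  define y :: "nat \<Rightarrow> 'k" where "y = (\<lambda>n. if n < 2 then 1 else 0)"
  have "summable (\<lambda>n. if n \<in> {..<2::nat} then (1::real) else 0)"
    by (rule summable_If_finite_set) auto
  moreover have "(\<lambda>n. norm (y n)) = (\<lambda>n. if n \<in> {..<2::nat} then (1::real) else 0)"
    by (auto simp: y_def)
  ultimately have "y \<in> carr L1" by (simp add: L1_def)
  then obtain x where x: "R x = y" using R(2) by (metis imageE)
  have Rx0: "R x 0 = 1" and Rx1: "R x (Suc 0) = 1" using x by (auto simp: y_def)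
  have main: "\<exists>q\<in>spoly L1 k. Tf R q \<noteq> Delta1 P q" if P: "hpoly (Esp sc) L1 m P" for P
  proof (rule ccontr)
    assume "\<not> (\<exists>q\<in>spoly L1 k. Tf R q \<noteq> Delta1 P q)"
    then have eq: "Tf R (monoq k c) x = monoq k c (P x)" for c
      using monoq_spoly[of k c] by (auto simp: Delta1_def)
    obtain A where A: "mlin (Esp sc) L1 m A" "\<forall>x. P x = A (\<lambda>_. x)"
      using P by (auto simp: hpoly_def Esp_def)
    have Pc: "P x \<in> carr L1" using A unfolding mlin_def by (simp add: Esp_def)
    define p where "p = P x"
    have ev: "(\<Prod>i<k. p (c i)) = monoq k c (ee 0) + monoq k c (ee 1)" for c
      using eq[of c] Pc by (simp add: Tf_def Rx0 Rx1 monoq_apply p_def)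
    have "(\<Prod>i<k. p 0) = 1"
      using ev[of "\<lambda>_. 0"] k0 by (simp add: monoq_ee)
    then have p0: "p 0 \<noteq> 0" using k0 by (auto simp: power_0_left)
    have "(\<Prod>i<k. p 1) = 1"
      using ev[of "\<lambda>_. 1"] k0 by (simp add: monoq_ee)
    then have p1: "p 1 \<noteq> 0" using k0 by (auto simp: power_0_left)
    define c where "c = (\<lambda>i::nat. if i = 0 then 1 else (0::nat))"
    have z0: "monoq k c (ee 0) = (0::'k)"
      unfolding monoq_ee using k0
      by (intro prod_zero) (auto simp: c_def intro!: bexI[of _ 0])
    have z1: "monoq k c (ee 1) = (0::'k)"
      unfolding monoq_ee using k0
      by (intro prod_zero) (auto simp: c_def intro!: bexI[of _ 1])
    have "(\<Prod>i<k. p (c i)) = 0" using ev[of c] z0 z1 by simp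
    then obtain i where "i < k" "p (c i) = 0" by auto
    then show False using p0 p1 by (auto simp: c_def split: if_splits)
  qed
  show ?thesis
    by (intro exI[of _ "Tf R"] conjI Tf_blin[OF R(1)] Tf_cont[OF R(1)] allI impI main)
qed

end
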